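(* Let $q\ge1$ and assume Hypothesis (H$_q$). Then for every $\theta>0$, $$\Big|f\Big(\frac{m(a+b)}{2}\Big)-\frac{\Gamma(\theta+1)2^{\theta-1}}{m^\theta(b-a)^\theta}\Big[J^\theta_{(\frac{m(a+b)}{2})^-}f(ma)+J^\theta_{(\frac{m(a+b)}{2})^+}f(mb)\Big]\Big|$$ $$\le\frac{m(b-a)}{4}\cdot\frac{1}{\theta+1}\Big(\frac{1}{\alpha+\theta+1}\Big)^{\frac1q}\Big\{\Big[(\theta+1)\Big|f'\Big(\frac{m(a+b)}2\Big)\Big|^q+\alpha m|f'(a)|^q\Big]^{\frac1q}+\Big[(\theta+1)\Big|f'\Big(\frac{m(a+b)}2\Big)\Big|^q+\alpha m|f'(b)|^q\Big]^{\frac1q}\Big\}.$$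
   Context: Let $\Gamma$ denote Euler's Gamma function. For $\theta>0$, $c=\frac{m(a+b)}{2}$: $J^\theta_{c^-}f(ma)=\frac{1}{\Gamma(\theta)}\int_{ma}^{c}(s-ma)^{\theta-1}f(s)\,ds$ and $J^\theta_{c^+}f(mb)=\frac{1}{\Gamma(\theta)}\int_{c}^{mb}(mb-s)^{\theta-1}f(s)\,ds$. $(\alpha,m)$-convexity: for $(\alpha,m)\in[0,1]\times(0,1]$ and an interval $K\subseteq[0,\infty)$, a function $g:K\to\mathbb{R}$ is $(\alpha,m)$-convex on $K$ if $g(tX+m(1-t)Y)\le t^\alpha g(X)+m(1-t^\alpha)g(Y)$ for all $X,Y\in K$ and $t\in[0,1]$ with $tX+m(1-t)Y\in K$ (convention $0^0=1$). Hypothesis (H$_q$): $I\subseteq[0,\infty)$ is an interval, $f:I\to\mathbb{R}$ is differentiable on the interior $I^\circ$, $m\in(0,1]$, $\alpha\in[0,1]$, $a<b$ with $ma,b\in I^\circ$, $f'$ is Lebesgue integrable on $[ma,mb]$, and $|f'|^q$ is $(\alpha,m)$-convex on $[ma,b]$. *)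

theory Defs
  imports "HOL-Analysis.Analysis"
begin

definition rpow0 :: "real \<Rightarrow> real \<Rightarrow> real" where
  "rpow0 t \<alpha> = (if t = 0 then (if \<alpha> = 0 then 1 else 0) else t powr \<alpha>)"

definition alpha_m_convex_on :: "real \<Rightarrow> real \<Rightarrow> real set \<Rightarrow> (real \<Rightarrow> real) \<Rightarrow> bool" where
  "alpha_m_convex_on \<alpha> m K g \<longleftrightarrow>
     (\<forall>X\<in>K. \<forall>Y\<in>K. \<forall>t\<in>{0..1}. t * X + m * (1 - t) * Y \<in> K \<longrightarrow>
        g (t * X + m * (1 - t) * Y) \<le> rpow0 t \<alpha> * g X + m * (1 - rpow0 t \<alpha>) * g Y)"

definition RL_left :: "real \<Rightarrow> real \<Rightarrow> (real \<Rightarrow> real) \<Rightarrow> real \<Rightarrow> real" where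
  "RL_left \<theta> c f x = (1 / Gamma \<theta>) * (LINT s:{x..c}|lborel. (s - x) powr (\<theta> - 1) * f s)"

definition RL_right :: "real \<Rightarrow> real \<Rightarrow> (real \<Rightarrow> real) \<Rightarrow> real \<Rightarrow> real" where
  "RL_right \<theta> c f y = (1 / Gamma \<theta>) * (LINT s:{c..y}|lborel. (y - s) powr (\<theta> - 1) * f s)"

end

theory Submission
  imports Defs
begin


lemma tangent_powr:
  fixes x K q :: real
  assumes "0 \<le> x" "0 < K" "1 \<le> q"
  shows "x powr (1/q) \<le> K powr (1/q) * (1 - 1/q) + (1/q) * K powr (1/q - 1) * x"
proof (cases "x = 0")
  case True
  have "0 \<le> 1 - 1/q" using assms by (simp add: field_simps)
  then show ?thesis using True assms by simp
next
  case False
  hence xp: "x > 0" using assms by simp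
  have y: "x powr (1/q) * K powr (1 - 1/q) \<le> (1/q) * x + (1 - 1/q) * K"
    by (rule Youngs_inequality_0) (use assms xp in \<open>auto simp: field_simps\<close>)
  have kk: "K powr (1 - 1/q) * K powr (1/q - 1) = 1"
    using assms by (simp add: powr_add[symmetric])
  have "K powr 1 * K powr (1/q - 1) = K powr (1/q)"
    by (subst powr_add[symmetric]) simp
  hence kk2: "K * K powr (1/q - 1) = K powr (1/q)"
    using assms by simp
  have "x powr (1/q) = x powr (1/q) * K powr (1 - 1/q) * K powr (1/q - 1)"
    using kk by (simp add: mult.assoc)
  also have "\<dots> \<le> ((1/q) * x + (1 - 1/q) * K) * K powr (1/q - 1)"
    by (rule mult_right_mono[OF y]) simp
  also have "\<dots> = K powr (1/q) * (1 - 1/q) + (1/q) * K powr (1/q - 1) * x"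
    using kk2 by (simp add: algebra_simps)
  finally show ?thesis .
qed



lemma power_mean_est:
  fixes w g P :: "real \<Rightarrow> real" and S :: "real set"
  assumes q: "1 \<le> q" and W: "W > 0" and R: "R \<ge> 0"
    and pt: "\<And>s. s \<in> S \<Longrightarrow> 0 \<le> g s \<and> 0 \<le> w s \<and> g s powr q \<le> P s"
    and wi: "(w has_integral W) S" and wPi: "((\<lambda>s. w s * P s) has_integral V) S"
    and VR: "V \<le> W * R"
    and wgi: "(\<lambda>s. w s * g s) integrable_on S"
  shows "integral S (\<lambda>s. w s * g s) \<le> W * R powr (1/q)"
proof -
  have key: "integral S (\<lambda>s. w s * g s) \<le> W * (K powr (1/q) * (1 - 1/q)) + (1/q) * K powr (1/q - 1) * (W * R)"
    if K: "K > 0" for K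
  proof -
    define A where "A = K powr (1/q) * (1 - 1/q)"
    define B where "B = (1/q) * K powr (1/q - 1)"
    have B0: "B \<ge> 0" unfolding B_def using q by simp
    have hi: "((\<lambda>s. A * w s + B * (w s * P s)) has_integral (A * W + B * V)) S"
      by (intro has_integral_add has_integral_mult_right wi wPi)
    have "integral S (\<lambda>s. w s * g s) \<le> integral S (\<lambda>s. A * w s + B * (w s * P s))"
    proof (rule integral_le[OF wgi])
      show "(\<lambda>s. A * w s + B * (w s * P s)) integrable_on S" using hi by blast
      fix s assume s: "s \<in> S"
      have g0: "0 \<le> g s" and w0: "0 \<le> w s" and gP: "g s powr q \<le> P s" using pt[OF s] by auto
      have P0: "0 \<le> P s" using gP by (meson order_trans powr_ge_zero)
      have "g s = (g s powr q) powr (1/q)"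
        using g0 q by (simp add: powr_powr)
      also have "\<dots> \<le> P s powr (1/q)"
        using gP q by (intro powr_mono2) auto
      also have "\<dots> \<le> A + B * P s"
        unfolding A_def B_def using tangent_powr[OF P0 K q] by simp
      finally have "g s \<le> A + B * P s" .
      hence "w s * g s \<le> w s * (A + B * P s)" using w0 by (rule mult_left_mono)
      thus "w s * g s \<le> A * w s + B * (w s * P s)" by (simp add: algebra_simps)
    qed
    also have "\<dots> = A * W + B * V" using hi by (rule integral_unique)
    also have "\<dots> \<le> A * W + B * (W * R)" using B0 VR by (intro add_left_mono mult_left_mono)
    finally show ?thesis unfolding A_def B_def by (simp add: algebra_simps)
  qed
  show ?thesis
  proof (cases "R > 0")
    case True
    have "R powr (1/q - 1) * R powr 1 = R powr (1/q)"
      by (subst powr_add[symmetric]) simp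
    hence eq: "R powr (1/q - 1) * R = R powr (1/q)" using True by simp
    have "(1/q) * R powr (1/q - 1) * (W * R) = (1/q) * W * (R powr (1/q - 1) * R)"
      by (simp only: mult_ac)
    also have "\<dots> = (1/q) * W * R powr (1/q)" by (simp only: eq)
    finally have e2: "(1/q) * R powr (1/q - 1) * (W * R) = (1/q) * W * R powr (1/q)" .
    have "integral S (\<lambda>s. w s * g s) \<le> W * (R powr (1/q) * (1 - 1/q)) + (1/q) * W * R powr (1/q)"
      using key[OF True] unfolding e2 .
    also have "\<dots> = W * R powr (1/q)" by (simp add: algebra_simps)
    finally show ?thesis .
  next
    case False
    hence R0: "R = 0" using R by simp
    let ?X = "integral S (\<lambda>s. w s * g s)"
    show ?thesis
    proof (rule ccontr)
      assume "\<not> ?thesis"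
      hence X: "?X > 0" using R0 by simp
      show False
      proof (cases "q = 1")
        case True
        thus False using key[of 1] X R0 by simp
      next
        case False
        hence c: "1 - 1/q > 0" using q by (simp add: field_simps)
        define z where "z = ?X / (2 * W * (1 - 1/q))"
        have z: "z > 0" unfolding z_def using X W c by simp
        have "(z powr q) powr (1/q) = z" using z q by (simp add: powr_powr)
        hence "?X \<le> W * (z * (1 - 1/q))" using key[of "z powr q"] z R0 by simp
        also have "\<dots> = ?X / 2"
        proof -
          have gen: "W * (x / (2 * W * cc) * cc) = x / 2" if "cc > 0" for x cc :: real
            using that W by (simp add: field_simps)
          show ?thesis unfolding z_def by (rule gen[OF c])
        qed
        finally show False using X by simp
      qed
    qed
  qed
qed



lemma dpow_left:
  fixes p x r :: real
  assumes "p < x"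
  shows "((\<lambda>s. (s - p) powr r) has_real_derivative r * (x - p) powr (r - 1)) (at x)"
proof -
  have "((\<lambda>s. s - p) has_real_derivative 1) (at x)" by (auto intro!: derivative_eq_intros)
  from DERIV_fun_powr[OF this, of r] assms show ?thesis by simp
qed

lemma dpow_right:
  fixes y x r :: real
  assumes "x < y"
  shows "((\<lambda>s. (y - s) powr r) has_real_derivative - (r * (y - x) powr (r - 1))) (at x)"
proof -
  have "((\<lambda>s. y - s) has_real_derivative -1) (at x)" by (auto intro!: derivative_eq_intros)
  from DERIV_fun_powr[OF this, of r] assms show ?thesis by simp
qed

lemma mono_int_left:
  fixes p c \<beta> :: real
  assumes "p < c" "\<beta> > -1"
  shows "((\<lambda>s. (s - p) powr \<beta>) has_integral (c - p) powr (\<beta> + 1) / (\<beta> + 1)) {p..c}"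
proof -
  define F where "F s = (s - p) powr (\<beta> + 1) / (\<beta> + 1)" for s
  have "((\<lambda>s. (s - p) powr \<beta>) has_integral (F c - F p)) {p..c}"
  proof (rule fundamental_theorem_of_calculus_interior)
    show "continuous_on {p..c} F"
      unfolding F_def using assms by (intro continuous_intros continuous_on_powr') auto
    fix x assume x: "x \<in> {p<..<c}"
    have "(F has_real_derivative (\<beta> + 1) * (x - p) powr (\<beta> + 1 - 1) / (\<beta> + 1)) (at x)"
      unfolding F_def using x by (intro DERIV_cdivide dpow_left) auto
    hence "(F has_real_derivative (x - p) powr \<beta>) (at x)" using assms by simp
    thus "(F has_vector_derivative (x - p) powr \<beta>) (at x)"
      by (simp add: has_real_derivative_iff_has_vector_derivative)
  qed (use assms in simp)
  thus ?thesis using assms by (simp add: F_def)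
qed

lemma mono_int_right:
  fixes y c \<beta> :: real
  assumes "c < y" "\<beta> > -1"
  shows "((\<lambda>s. (y - s) powr \<beta>) has_integral (y - c) powr (\<beta> + 1) / (\<beta> + 1)) {c..y}"
proof -
  define F where "F s = - ((y - s) powr (\<beta> + 1) / (\<beta> + 1))" for s
  have "((\<lambda>s. (y - s) powr \<beta>) has_integral (F y - F c)) {c..y}"
  proof (rule fundamental_theorem_of_calculus_interior)
    show "continuous_on {c..y} F"
      unfolding F_def using assms by (intro continuous_intros continuous_on_powr') auto
    fix x assume x: "x \<in> {c<..<y}"
    have "(F has_real_derivative - (- ((\<beta> + 1) * (y - x) powr (\<beta> + 1 - 1)) / (\<beta> + 1))) (at x)"
      unfolding F_def using x by (intro DERIV_minus DERIV_cdivide dpow_right) auto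
    hence "(F has_real_derivative (y - x) powr \<beta>) (at x)" using assms by simp
    thus "(F has_vector_derivative (y - x) powr \<beta>) (at x)"
      by (simp add: has_real_derivative_iff_has_vector_derivative)
  qed (use assms in simp)
  thus ?thesis using assms by (simp add: F_def)
qed



lemma ibp_left:
  fixes f f' :: "real \<Rightarrow> real"
  assumes pc: "p < c" and th: "\<theta> > 0"
    and deriv: "\<And>x. x \<in> {p..c} \<Longrightarrow> (f has_real_derivative f' x) (at x)"
    and f'ai: "f' absolutely_integrable_on {p..c}"
  shows "set_integrable lborel {p..c} (\<lambda>s. (s - p) powr (\<theta> - 1) * f s)"
    and "(\<lambda>s. (s - p) powr \<theta> * f' s) absolutely_integrable_on {p..c}"
    and "\<theta> * integral {p..c} (\<lambda>s. (s - p) powr (\<theta> - 1) * f s)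
           = (c - p) powr \<theta> * f c - integral {p..c} (\<lambda>s. (s - p) powr \<theta> * f' s)"
proof -
  have cont: "continuous_on {p..c} f"
    using deriv by (meson DERIV_isCont continuous_at_imp_continuous_on)
  obtain M where M: "\<And>s. s \<in> {p..c} \<Longrightarrow> \<bar>f s\<bar> \<le> M"
    using compact_imp_bounded[OF compact_continuous_image[OF cont compact_Icc]]
    unfolding bounded_iff by (metis image_eqI real_norm_def)
  have wcont: "continuous_on {p..c} (\<lambda>s. (s - p) powr \<theta>)"
    using th by (intro continuous_intros continuous_on_powr') auto
  show ai2: "(\<lambda>s. (s - p) powr \<theta> * f' s) absolutely_integrable_on {p..c}"
  proof (rule absolutely_integrable_bounded_measurable_product_real)
    show "(\<lambda>s. (s - p) powr \<theta>) \<in> borel_measurable (lebesgue_on {p..c})"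
      by (rule continuous_imp_measurable_on_sets_lebesgue[OF wcont]) auto
    show "{p..c} \<in> sets lebesgue" by simp
    show "bounded ((\<lambda>s. (s - p) powr \<theta>) ` {p..c})"
      by (rule compact_imp_bounded[OF compact_continuous_image[OF wcont compact_Icc]])
  qed (rule f'ai)
  have int2: "(\<lambda>s. (s - p) powr \<theta> * f' s) integrable_on {p..c}"
    using ai2 by (rule set_lebesgue_integral_eq_integral(1))
  have ftc: "((\<lambda>s. \<theta> * ((s - p) powr (\<theta> - 1) * f s) + (s - p) powr \<theta> * f' s) has_integral
        ((c - p) powr \<theta> * f c - (p - p) powr \<theta> * f p)) {p..c}"
  proof (rule fundamental_theorem_of_calculus_interior)
    show "continuous_on {p..c} (\<lambda>s. (s - p) powr \<theta> * f s)"
      by (intro continuous_on_mult wcont cont)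
    fix x assume x: "x \<in> {p<..<c}"
    have "((\<lambda>s. (s - p) powr \<theta> * f s) has_real_derivative
            \<theta> * (x - p) powr (\<theta> - 1) * f x + (x - p) powr \<theta> * f' x) (at x)"
    proof -
      have x1: "p < x" and x2: "x \<in> {p..c}" using x by auto
      show ?thesis using DERIV_mult[OF dpow_left[OF x1, of \<theta>] deriv[OF x2]] by (simp add: mult.commute)
    qed
    thus "((\<lambda>s. (s - p) powr \<theta> * f s) has_vector_derivative
            \<theta> * ((x - p) powr (\<theta> - 1) * f x) + (x - p) powr \<theta> * f' x) (at x)"
      by (simp add: has_real_derivative_iff_has_vector_derivative mult.assoc)
  qed (use pc in simp)
  hence ftc': "((\<lambda>s. \<theta> * ((s - p) powr (\<theta> - 1) * f s) + (s - p) powr \<theta> * f' s) has_integral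
        ((c - p) powr \<theta> * f c)) {p..c}" by simp
  have h2: "((\<lambda>s. (s - p) powr \<theta> * f' s) has_integral integral {p..c} (\<lambda>s. (s - p) powr \<theta> * f' s)) {p..c}"
    using int2 by (rule integrable_integral)
  have h1: "((\<lambda>s. \<theta> * ((s - p) powr (\<theta> - 1) * f s)) has_integral
      ((c - p) powr \<theta> * f c - integral {p..c} (\<lambda>s. (s - p) powr \<theta> * f' s))) {p..c}"
    using has_integral_diff[OF ftc' h2] by simp
  hence "((\<lambda>s. (s - p) powr (\<theta> - 1) * f s) has_integral
      ((c - p) powr \<theta> * f c - integral {p..c} (\<lambda>s. (s - p) powr \<theta> * f' s)) / \<theta>) {p..c}"
    using th by (subst (asm) has_integral_mult_right_iff) auto
  hence "integral {p..c} (\<lambda>s. (s - p) powr (\<theta> - 1) * f s) =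
      ((c - p) powr \<theta> * f c - integral {p..c} (\<lambda>s. (s - p) powr \<theta> * f' s)) / \<theta>"
    by (rule integral_unique)
  thus "\<theta> * integral {p..c} (\<lambda>s. (s - p) powr (\<theta> - 1) * f s)
           = (c - p) powr \<theta> * f c - integral {p..c} (\<lambda>s. (s - p) powr \<theta> * f' s)"
    using th by simp
  have pint: "((\<lambda>s. (s - p) powr (\<theta> - 1)) has_integral (c - p) powr (\<theta> - 1 + 1) / (\<theta> - 1 + 1)) {p..c}"
    using pc th by (intro mono_int_left) auto
  have pai: "(\<lambda>s. (s - p) powr (\<theta> - 1)) absolutely_integrable_on {p..c}"
    by (subst absolutely_integrable_on_iff_nonneg) (use pint in auto)
  show "set_integrable lborel {p..c} (\<lambda>s. (s - p) powr (\<theta> - 1) * f s)"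
    unfolding set_integrable_def
  proof (rule Bochner_Integration.integrable_bound[OF _ _ AE_I2])
    from integrable_mult_right[OF pai [unfolded set_integrable_def], of M]
    show "integrable lborel (\<lambda>x. indicat_real {p..c} x *\<^sub>R (M * (x - p) powr (\<theta> - 1)))"
      by (subst (asm) integrable_completion) (auto simp: mult_ac)
  next
    have m1: "(\<lambda>x. indicat_real {p..c} x *\<^sub>R f x) \<in> borel_measurable borel"
      by (rule borel_measurable_continuous_on_indicator[OF _ cont]) auto
    have "(\<lambda>x. (x - p) powr (\<theta> - 1) * (indicat_real {p..c} x *\<^sub>R f x)) \<in> borel_measurable borel"
      using m1 by measurable
    thus "(\<lambda>x. indicat_real {p..c} x *\<^sub>R ((x - p) powr (\<theta> - 1) * f x)) \<in> borel_measurable lborel"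
      by (simp add: mult_ac)
  next
    fix x
    show "norm (indicat_real {p..c} x *\<^sub>R ((x - p) powr (\<theta> - 1) * f x))
        \<le> norm (indicat_real {p..c} x *\<^sub>R (M * (x - p) powr (\<theta> - 1)))"
    proof (cases "x \<in> {p..c}")
      case True
      have "\<bar>(x - p) powr (\<theta> - 1) * f x\<bar> = (x - p) powr (\<theta> - 1) * \<bar>f x\<bar>"
        by (simp add: abs_mult)
      also have "\<dots> \<le> (x - p) powr (\<theta> - 1) * M" by (intro mult_left_mono M True) auto
      also have "\<dots> \<le> \<bar>M * (x - p) powr (\<theta> - 1)\<bar>" by (simp add: mult.commute)
      finally show ?thesis using True by simp
    qed simp
  qed
qed



lemma ibp_right:
  fixes f f' :: "real \<Rightarrow> real"
  assumes pc: "c < y" and th: "\<theta> > 0"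
    and deriv: "\<And>x. x \<in> {c..y} \<Longrightarrow> (f has_real_derivative f' x) (at x)"
    and f'ai: "f' absolutely_integrable_on {c..y}"
  shows "set_integrable lborel {c..y} (\<lambda>s. (y - s) powr (\<theta> - 1) * f s)"
    and "(\<lambda>s. (y - s) powr \<theta> * f' s) absolutely_integrable_on {c..y}"
    and "\<theta> * integral {c..y} (\<lambda>s. (y - s) powr (\<theta> - 1) * f s)
           = (y - c) powr \<theta> * f c + integral {c..y} (\<lambda>s. (y - s) powr \<theta> * f' s)"
proof -
  have cont: "continuous_on {c..y} f"
    using deriv by (meson DERIV_isCont continuous_at_imp_continuous_on)
  obtain M where M: "\<And>s. s \<in> {c..y} \<Longrightarrow> \<bar>f s\<bar> \<le> M"
    using compact_imp_bounded[OF compact_continuous_image[OF cont compact_Icc]]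
    unfolding bounded_iff by (metis image_eqI real_norm_def)
  have wcont: "continuous_on {c..y} (\<lambda>s. (y - s) powr \<theta>)"
    using th by (intro continuous_intros continuous_on_powr') auto
  show ai2: "(\<lambda>s. (y - s) powr \<theta> * f' s) absolutely_integrable_on {c..y}"
  proof (rule absolutely_integrable_bounded_measurable_product_real)
    show "(\<lambda>s. (y - s) powr \<theta>) \<in> borel_measurable (lebesgue_on {c..y})"
      by (rule continuous_imp_measurable_on_sets_lebesgue[OF wcont]) auto
    show "{c..y} \<in> sets lebesgue" by simp
    show "bounded ((\<lambda>s. (y - s) powr \<theta>) ` {c..y})"
      by (rule compact_imp_bounded[OF compact_continuous_image[OF wcont compact_Icc]])
  qed (rule f'ai)
  have int2: "(\<lambda>s. (y - s) powr \<theta> * f' s) integrable_on {c..y}"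
    using ai2 by (rule set_lebesgue_integral_eq_integral(1))
  have ftc: "((\<lambda>s. (y - s) powr \<theta> * f' s - \<theta> * ((y - s) powr (\<theta> - 1) * f s)) has_integral
        ((y - y) powr \<theta> * f y - (y - c) powr \<theta> * f c)) {c..y}"
  proof (rule fundamental_theorem_of_calculus_interior)
    show "continuous_on {c..y} (\<lambda>s. (y - s) powr \<theta> * f s)"
      by (intro continuous_on_mult wcont cont)
    fix x assume x: "x \<in> {c<..<y}"
    have "((\<lambda>s. (y - s) powr \<theta> * f s) has_real_derivative
            - (\<theta> * (y - x) powr (\<theta> - 1)) * f x + (y - x) powr \<theta> * f' x) (at x)"
    proof -
      have x1: "x < y" and x2: "x \<in> {c..y}" using x by auto
      show ?thesis using DERIV_mult[OF dpow_right[OF x1, of \<theta>] deriv[OF x2]] by (simp add: mult.commute)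
    qed
    thus "((\<lambda>s. (y - s) powr \<theta> * f s) has_vector_derivative
            (y - x) powr \<theta> * f' x - \<theta> * ((y - x) powr (\<theta> - 1) * f x)) (at x)"
      by (simp add: has_real_derivative_iff_has_vector_derivative algebra_simps)
  qed (use pc in simp)
  hence ftc': "((\<lambda>s. (y - s) powr \<theta> * f' s - \<theta> * ((y - s) powr (\<theta> - 1) * f s)) has_integral
        (- ((y - c) powr \<theta> * f c))) {c..y}" by simp
  have h2: "((\<lambda>s. (y - s) powr \<theta> * f' s) has_integral integral {c..y} (\<lambda>s. (y - s) powr \<theta> * f' s)) {c..y}"
    using int2 by (rule integrable_integral)
  have h1: "((\<lambda>s. \<theta> * ((y - s) powr (\<theta> - 1) * f s)) has_integral
      ((y - c) powr \<theta> * f c + integral {c..y} (\<lambda>s. (y - s) powr \<theta> * f' s))) {c..y}"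
    using has_integral_diff[OF h2 ftc'] by (simp add: add.commute)
  hence "((\<lambda>s. (y - s) powr (\<theta> - 1) * f s) has_integral
      ((y - c) powr \<theta> * f c + integral {c..y} (\<lambda>s. (y - s) powr \<theta> * f' s)) / \<theta>) {c..y}"
    using th by (subst (asm) has_integral_mult_right_iff) auto
  hence "integral {c..y} (\<lambda>s. (y - s) powr (\<theta> - 1) * f s) =
      ((y - c) powr \<theta> * f c + integral {c..y} (\<lambda>s. (y - s) powr \<theta> * f' s)) / \<theta>"
    by (rule integral_unique)
  thus "\<theta> * integral {c..y} (\<lambda>s. (y - s) powr (\<theta> - 1) * f s)
           = (y - c) powr \<theta> * f c + integral {c..y} (\<lambda>s. (y - s) powr \<theta> * f' s)"
    using th by simp
  have pint: "((\<lambda>s. (y - s) powr (\<theta> - 1)) has_integral (y - c) powr (\<theta> - 1 + 1) / (\<theta> - 1 + 1)) {c..y}"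
    using pc th by (intro mono_int_right) auto
  have pai: "(\<lambda>s. (y - s) powr (\<theta> - 1)) absolutely_integrable_on {c..y}"
    by (subst absolutely_integrable_on_iff_nonneg) (use pint in auto)
  show "set_integrable lborel {c..y} (\<lambda>s. (y - s) powr (\<theta> - 1) * f s)"
    unfolding set_integrable_def
  proof (rule Bochner_Integration.integrable_bound[OF _ _ AE_I2])
    from integrable_mult_right[OF pai [unfolded set_integrable_def], of M]
    show "integrable lborel (\<lambda>x. indicat_real {c..y} x *\<^sub>R (M * (y - x) powr (\<theta> - 1)))"
      by (subst (asm) integrable_completion) (auto simp: mult_ac)
  next
    have m1: "(\<lambda>x. indicat_real {c..y} x *\<^sub>R f x) \<in> borel_measurable borel"
      by (rule borel_measurable_continuous_on_indicator[OF _ cont]) auto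
    have "(\<lambda>x. (y - x) powr (\<theta> - 1) * (indicat_real {c..y} x *\<^sub>R f x)) \<in> borel_measurable borel"
      using m1 by measurable
    thus "(\<lambda>x. indicat_real {c..y} x *\<^sub>R ((y - x) powr (\<theta> - 1) * f x)) \<in> borel_measurable lborel"
      by (simp add: mult_ac)
  next
    fix x
    show "norm (indicat_real {c..y} x *\<^sub>R ((y - x) powr (\<theta> - 1) * f x))
        \<le> norm (indicat_real {c..y} x *\<^sub>R (M * (y - x) powr (\<theta> - 1)))"
    proof (cases "x \<in> {c..y}")
      case True
      have "\<bar>(y - x) powr (\<theta> - 1) * f x\<bar> = (y - x) powr (\<theta> - 1) * \<bar>f x\<bar>"
        by (simp add: abs_mult)
      also have "\<dots> \<le> (y - x) powr (\<theta> - 1) * M" by (intro mult_left_mono M True) auto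
      also have "\<dots> \<le> \<bar>M * (y - x) powr (\<theta> - 1)\<bar>" by (simp add: mult.commute)
      finally show ?thesis using True by simp
    qed simp
  qed
qed



lemma est_side:
  fixes f' d :: "real \<Rightarrow> real" and S :: "real set"
  assumes q: "1 \<le> q" and h: "h > 0" and th: "\<theta> > 0" and \<alpha>: "0 \<le> \<alpha>"
    and Gc: "Gc \<ge> 0" and Ga: "Ga \<ge> 0" and m: "m > 0"
    and dint: "\<And>\<beta>. \<beta> > -1 \<Longrightarrow> ((\<lambda>s. d s powr \<beta>) has_integral h powr (\<beta> + 1) / (\<beta> + 1)) S"
    and d0: "\<And>s. s \<in> S \<Longrightarrow> d s \<ge> 0"
    and pt: "\<And>s. s \<in> S \<Longrightarrow> \<bar>f' s\<bar> powr q \<le> rpow0 (d s / h) \<alpha> * Gc + m * (1 - rpow0 (d s / h) \<alpha>) * Ga"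
    and ai: "(\<lambda>s. d s powr \<theta> * f' s) absolutely_integrable_on S"
  shows "\<bar>integral S (\<lambda>s. d s powr \<theta> * f' s)\<bar>
     \<le> h powr (\<theta> + 1) / (\<theta> + 1) * (((\<theta> + 1) * Gc + \<alpha> * m * Ga) / (\<alpha> + \<theta> + 1)) powr (1/q)"
proof -
  define W where "W = h powr (\<theta> + 1) / (\<theta> + 1)"
  define R where "R = ((\<theta> + 1) * Gc + \<alpha> * m * Ga) / (\<alpha> + \<theta> + 1)"
  define P where "P s = rpow0 (d s / h) \<alpha> * Gc + m * (1 - rpow0 (d s / h) \<alpha>) * Ga" for s
  have W0: "W > 0" unfolding W_def using h th by simp
  have R0: "R \<ge> 0" unfolding R_def using Gc Ga \<alpha> m th by simp
  have ai': "(\<lambda>s. norm (d s powr \<theta> * f' s)) absolutely_integrable_on S"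
    using absolutely_integrable_norm[OF ai] by (simp add: o_def)
  have eqn: "(\<lambda>s. norm (d s powr \<theta> * f' s)) = (\<lambda>s. d s powr \<theta> * \<bar>f' s\<bar>)"
    by (auto simp: abs_mult)
  have wgi: "(\<lambda>s. d s powr \<theta> * \<bar>f' s\<bar>) integrable_on S"
    using set_lebesgue_integral_eq_integral(1)[OF ai'] unfolding eqn .
  have fi: "(\<lambda>s. d s powr \<theta> * f' s) integrable_on S"
    using set_lebesgue_integral_eq_integral(1)[OF ai] .
  have "\<bar>integral S (\<lambda>s. d s powr \<theta> * f' s)\<bar> \<le> integral S (\<lambda>s. d s powr \<theta> * \<bar>f' s\<bar>)"
    using integral_norm_bound_integral[OF fi wgi] by (simp add: abs_mult)
  also have "\<dots> \<le> W * R powr (1/q)"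
  proof (rule power_mean_est[OF q W0 R0 _ _ _ _ wgi])
    show "\<And>s. s \<in> S \<Longrightarrow> 0 \<le> \<bar>f' s\<bar> \<and> 0 \<le> d s powr \<theta> \<and> \<bar>f' s\<bar> powr q \<le> P s"
      using pt unfolding P_def by auto
    show "((\<lambda>s. d s powr \<theta>) has_integral W) S"
      unfolding W_def using dint[of \<theta>] th by simp
    define X where "X = h powr (\<theta> + 1)"
    have wr: "d s powr \<theta> * rpow0 (d s / h) \<alpha> = d s powr (\<theta> + \<alpha>) / h powr \<alpha>" if s: "s \<in> S" for s
    proof (cases "d s = 0")
      case True thus ?thesis by (simp add: rpow0_def)
    next
      case False
      hence dp: "d s > 0" using d0[OF s] by simp
      hence "rpow0 (d s / h) \<alpha> = d s powr \<alpha> / h powr \<alpha>"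
        using h by (simp add: rpow0_def powr_divide)
      thus ?thesis by (simp add: powr_add)
    qed
    have hi: "((\<lambda>s. Gc * (d s powr (\<theta> + \<alpha>) / h powr \<alpha>) + m * Ga * (d s powr \<theta> - d s powr (\<theta> + \<alpha>) / h powr \<alpha>))
       has_integral (Gc * (h powr (\<theta> + \<alpha> + 1) / (\<theta> + \<alpha> + 1) / h powr \<alpha>)
          + m * Ga * (h powr (\<theta> + 1) / (\<theta> + 1) - h powr (\<theta> + \<alpha> + 1) / (\<theta> + \<alpha> + 1) / h powr \<alpha>))) S"
      using th \<alpha> by (intro has_integral_add has_integral_mult_right has_integral_diff has_integral_divide dint) auto
    have hpow: "h powr (\<theta> + \<alpha> + 1) = X * h powr \<alpha>"
      unfolding X_def by (simp add: powr_add[symmetric] add_ac)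
    have val: "Gc * (h powr (\<theta> + \<alpha> + 1) / (\<theta> + \<alpha> + 1) / h powr \<alpha>)
          + m * Ga * (h powr (\<theta> + 1) / (\<theta> + 1) - h powr (\<theta> + \<alpha> + 1) / (\<theta> + \<alpha> + 1) / h powr \<alpha>)
        = W * R"
    proof -
      have gen: "Gc * (X * H / (t + a + 1) / H) + m * Ga * (X / (t + 1) - X * H / (t + a + 1) / H)
          = X / (t + 1) * (((t + 1) * Gc + a * m * Ga) / (a + t + 1))"
        if "H > 0" "t > 0" "a \<ge> 0" for H t a :: real
      proof -
        have e1: "X * H / (t + a + 1) / H = X / (t + a + 1)" using that by simp
        have g2: "Gc * (X / v) + m * Ga * (X / u - X / v) = X / u * ((u * Gc + (v - u) * m * Ga) / v)"
          if "u > 0" "v > 0" for u v :: real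
          using that by (simp add: field_simps)
        have "t + a + 1 > 0" "t + 1 > 0" using that by auto
        from g2[OF this(2) this(1)] show ?thesis unfolding e1 by (simp add: add_ac)
      qed
      show ?thesis unfolding hpow W_def R_def X_def[symmetric] using gen[of "h powr \<alpha>" \<theta> \<alpha>] h th \<alpha> by simp
    qed
    have "((\<lambda>s. d s powr \<theta> * P s) has_integral W * R) S"
    proof -
      have "((\<lambda>s. d s powr \<theta> * P s) has_integral W * R) S \<longleftrightarrow>
        ((\<lambda>s. Gc * (d s powr (\<theta> + \<alpha>) / h powr \<alpha>) + m * Ga * (d s powr \<theta> - d s powr (\<theta> + \<alpha>) / h powr \<alpha>)) has_integral W * R) S"
      proof (rule has_integral_cong)
        fix s assume s: "s \<in> S"
        show "d s powr \<theta> * P s = Gc * (d s powr (\<theta> + \<alpha>) / h powr \<alpha>) + m * Ga * (d s powr \<theta> - d s powr (\<theta> + \<alpha>) / h powr \<alpha>)"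
          unfolding P_def using wr[OF s] by (simp add: algebra_simps)
      qed
      thus ?thesis using hi val by simp
    qed
    thus "((\<lambda>s. d s powr \<theta> * P s) has_integral W * R) S" .
  qed simp
  finally show ?thesis unfolding W_def R_def .
qed



theorem mainTheorem6:
  fixes f f' :: "real \<Rightarrow> real" and I :: "real set"
    and m \<alpha> a b q \<theta> :: real
  assumes q: "q \<ge> 1"
    and I_int: "is_interval I" and I_nonneg: "I \<subseteq> {0..}"
    and deriv: "\<And>x. x \<in> interior I \<Longrightarrow> (f has_real_derivative f' x) (at x)"
    and m: "0 < m" "m \<le> 1"
    and \<alpha>: "0 \<le> \<alpha>" "\<alpha> \<le> 1"
    and ab: "a < b"
    and ma_in: "m * a \<in> interior I" and b_in: "b \<in> interior I"
    and f'_int: "set_integrable lborel {m * a..m * b} f'"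
    and conv: "alpha_m_convex_on \<alpha> m {m * a..b} (\<lambda>x. \<bar>f' x\<bar> powr q)"
    and \<theta>: "\<theta> > 0"
  shows "\<bar>f (m * (a + b) / 2)
           - Gamma (\<theta> + 1) * 2 powr (\<theta> - 1) / (m powr \<theta> * (b - a) powr \<theta>)
             * (RL_left \<theta> (m * (a + b) / 2) f (m * a) + RL_right \<theta> (m * (a + b) / 2) f (m * b))\<bar>
         \<le> m * (b - a) / 4 * (1 / (\<theta> + 1)) * (1 / (\<alpha> + \<theta> + 1)) powr (1 / q)
           * (((\<theta> + 1) * \<bar>f' (m * (a + b) / 2)\<bar> powr q + \<alpha> * m * \<bar>f' a\<bar> powr q) powr (1 / q)
            + ((\<theta> + 1) * \<bar>f' (m * (a + b) / 2)\<bar> powr q + \<alpha> * m * \<bar>f' b\<bar> powr q) powr (1 / q))"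
proof -
  define c where "c = m * (a + b) / 2"
  define p where "p = m * a"
  define y where "y = m * b"
  define h where "h = m * (b - a) / 2"
  have ma0: "m * a \<ge> 0" using ma_in I_nonneg interior_subset by fastforce
  have a0: "a \<ge> 0" using ma0 m by (simp add: zero_le_mult_iff)
  have b0: "b \<ge> 0" using a0 ab by simp
  have h0: "h > 0" unfolding h_def using m ab by simp
  have pc: "p < c" and cy: "c < y" unfolding p_def c_def y_def using m ab by (auto simp: field_simps)
  have hc: "c - p = h" and hy: "y - c = h" unfolding p_def c_def y_def h_def by (auto simp: field_simps)
  have yb: "y \<le> b" unfolding y_def using m b0 by (simp add: mult_left_le_one_le)
  have ii: "is_interval (interior I)"
    using I_int by (simp add: is_interval_convex_1)
  have sub: "{p..b} \<subseteq> interior I"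
  proof
    fix x assume x: "x \<in> {p..b}"
    show "x \<in> interior I"
      using ii[unfolded is_interval_1, rule_format, OF ma_in b_in, of x] x unfolding p_def by simp
  qed
  have derivI: "\<And>x. x \<in> {p..y} \<Longrightarrow> (f has_real_derivative f' x) (at x)"
    using sub yb by (intro deriv) auto
  have f'ai: "f' absolutely_integrable_on {p..y}"
  proof -
    have i: "integrable lborel (\<lambda>x. indicat_real {p..y} x *\<^sub>R f' x)"
      using f'_int unfolding set_integrable_def p_def y_def .
    have "integrable lebesgue (\<lambda>x. indicat_real {p..y} x *\<^sub>R f' x)"
      using i by (subst integrable_completion) (auto dest: borel_measurable_integrable)
    thus ?thesis unfolding set_integrable_def .
  qed
  have aiL: "f' absolutely_integrable_on {p..c}"
    by (rule absolutely_integrable_on_subinterval[OF f'ai]) (use pc cy in auto)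
  have aiR: "f' absolutely_integrable_on {c..y}"
    by (rule absolutely_integrable_on_subinterval[OF f'ai]) (use pc cy in auto)
  have derivL: "\<And>x. x \<in> {p..c} \<Longrightarrow> (f has_real_derivative f' x) (at x)"
    using cy by (intro derivI) auto
  have derivR: "\<And>x. x \<in> {c..y} \<Longrightarrow> (f has_real_derivative f' x) (at x)"
    using pc by (intro derivI) auto
  note L = ibp_left[OF pc \<theta> derivL aiL]
  note R = ibp_right[OF cy \<theta> derivR aiR]
  define JL where "JL = integral {p..c} (\<lambda>s. (s - p) powr (\<theta> - 1) * f s)"
  define JR where "JR = integral {c..y} (\<lambda>s. (y - s) powr (\<theta> - 1) * f s)"
  define IL where "IL = integral {p..c} (\<lambda>s. (s - p) powr \<theta> * f' s)"
  define IR where "IR = integral {c..y} (\<lambda>s. (y - s) powr \<theta> * f' s)"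
  have RLl: "RL_left \<theta> c f p = 1 / Gamma \<theta> * JL"
    unfolding RL_left_def JL_def using set_borel_integral_eq_integral(2)[OF L(1)] by simp
  have RLr: "RL_right \<theta> c f y = 1 / Gamma \<theta> * JR"
    unfolding RL_right_def JR_def using set_borel_integral_eq_integral(2)[OF R(1)] by simp
  have eL: "\<theta> * JL = h powr \<theta> * f c - IL" using L(3) unfolding JL_def IL_def hc .
  have eR: "\<theta> * JR = h powr \<theta> * f c + IR" using R(3) unfolding JR_def IR_def hy .
  define Gc where "Gc = \<bar>f' c\<bar> powr q"
  define Ga where "Ga = \<bar>f' a\<bar> powr q"
  define Gb where "Gb = \<bar>f' b\<bar> powr q"
  have convD: "\<And>X Y t. X \<in> {m*a..b} \<Longrightarrow> Y \<in> {m*a..b} \<Longrightarrow> t \<in> {0..1} \<Longrightarrow> t * X + m * (1 - t) * Y \<in> {m*a..b} \<Longrightarrow>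
      \<bar>f' (t * X + m * (1 - t) * Y)\<bar> powr q \<le> rpow0 t \<alpha> * \<bar>f' X\<bar> powr q + m * (1 - rpow0 t \<alpha>) * \<bar>f' Y\<bar> powr q"
    using conv unfolding alpha_m_convex_on_def by blast
  have cin: "c \<in> {m*a..b}" using pc cy yb unfolding p_def by auto
  have maa: "m * a \<le> a" using a0 m by (simp add: mult_left_le_one_le)
  have ain: "a \<in> {m*a..b}" using maa ab by auto
  have bin: "b \<in> {m*a..b}" using maa ab by auto
  have estL: "\<bar>IL\<bar> \<le> h powr (\<theta> + 1) / (\<theta> + 1) * (((\<theta> + 1) * Gc + \<alpha> * m * Ga) / (\<alpha> + \<theta> + 1)) powr (1/q)"
    unfolding IL_def
  proof (rule est_side[OF q h0 \<theta> \<alpha>(1) _ _ m(1)])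
    show "Gc \<ge> 0" "Ga \<ge> 0" unfolding Gc_def Ga_def by auto
    show "((\<lambda>s. (s - p) powr \<beta>) has_integral h powr (\<beta> + 1) / (\<beta> + 1)) {p..c}" if "\<beta> > -1" for \<beta>
      using mono_int_left[OF pc that] unfolding hc .
    show "\<And>s. s \<in> {p..c} \<Longrightarrow> 0 \<le> s - p" by auto
    show "(\<lambda>s. (s - p) powr \<theta> * f' s) absolutely_integrable_on {p..c}" by (rule L(2))
    fix s assume s: "s \<in> {p..c}"
    define t where "t = (s - p) / h"
    have t: "t \<in> {0..1}" unfolding t_def using s h0 hc by (auto simp: field_simps)
    have st: "t * c + m * (1 - t) * a = s"
      unfolding t_def using h0 hc unfolding p_def by (simp add: field_simps)
    have "s \<in> {m*a..b}" using s cy yb unfolding p_def by auto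
    from convD[OF cin ain t] this st
    show "\<bar>f' s\<bar> powr q \<le> rpow0 ((s - p) / h) \<alpha> * Gc + m * (1 - rpow0 ((s - p) / h) \<alpha>) * Ga"
      unfolding Gc_def Ga_def t_def by simp
  qed
  have estR: "\<bar>IR\<bar> \<le> h powr (\<theta> + 1) / (\<theta> + 1) * (((\<theta> + 1) * Gc + \<alpha> * m * Gb) / (\<alpha> + \<theta> + 1)) powr (1/q)"
    unfolding IR_def
  proof (rule est_side[OF q h0 \<theta> \<alpha>(1) _ _ m(1)])
    show "Gc \<ge> 0" "Gb \<ge> 0" unfolding Gc_def Gb_def by auto
    show "((\<lambda>s. (y - s) powr \<beta>) has_integral h powr (\<beta> + 1) / (\<beta> + 1)) {c..y}" if "\<beta> > -1" for \<beta>
      using mono_int_right[OF cy that] unfolding hy .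
    show "\<And>s. s \<in> {c..y} \<Longrightarrow> 0 \<le> y - s" by auto
    show "(\<lambda>s. (y - s) powr \<theta> * f' s) absolutely_integrable_on {c..y}" by (rule R(2))
    fix s assume s: "s \<in> {c..y}"
    define t where "t = (y - s) / h"
    have t: "t \<in> {0..1}" unfolding t_def using s h0 hy by (auto simp: field_simps)
    have "t * c + m * (1 - t) * b = t * c + (1 - t) * y" unfolding y_def by (simp add: algebra_simps)
    also have "\<dots> = y - t * h" by (simp add: hy[symmetric] algebra_simps)
    also have "\<dots> = s" unfolding t_def using h0 by simp
    finally have st: "t * c + m * (1 - t) * b = s" .
    have "s \<in> {m*a..b}" using s pc yb unfolding p_def by auto
    from convD[OF cin bin t] this st
    show "\<bar>f' s\<bar> powr q \<le> rpow0 ((y - s) / h) \<alpha> * Gc + m * (1 - rpow0 ((y - s) / h) \<alpha>) * Gb"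
      unfolding Gc_def Gb_def t_def by simp
  qed
  define H where "H = h powr \<theta>"
  have H0: "H > 0" unfolding H_def using h0 by simp
  have G0: "Gamma \<theta> > 0" using \<theta> by simp
  have Gp1: "Gamma (\<theta> + 1) = \<theta> * Gamma \<theta>"
    using \<theta> by (intro Gamma_plus1) (auto dest: nonpos_Ints_nonpos)
  have D: "m powr \<theta> * (b - a) powr \<theta> = 2 powr \<theta> * H"
  proof -
    have "m powr \<theta> * (b - a) powr \<theta> = (m * (b - a)) powr \<theta>" by (simp add: powr_mult)
    also have "m * (b - a) = 2 * h" unfolding h_def by simp
    also have "(2 * h) powr \<theta> = 2 powr \<theta> * H" unfolding H_def by (simp add: powr_mult)
    finally show ?thesis .
  qed
  have two: "2 powr (\<theta> - 1) = 2 powr \<theta> / 2" by (simp add: powr_diff)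
  have coef: "Gamma (\<theta> + 1) * 2 powr (\<theta> - 1) / (m powr \<theta> * (b - a) powr \<theta>) = \<theta> * Gamma \<theta> / (2 * H)"
    unfolding D two Gp1 using H0 by (simp add: field_simps)
  have expr: "f c - \<theta> * Gamma \<theta> / (2 * H) * (1 / Gamma \<theta> * JL + 1 / Gamma \<theta> * JR) = (IL - IR) / (2 * H)"
  proof -
    have "\<theta> * Gamma \<theta> / (2 * H) * (1 / Gamma \<theta> * JL + 1 / Gamma \<theta> * JR) = (\<theta> * JL + \<theta> * JR) / (2 * H)"
      using G0 H0 by (simp add: field_simps)
    also have "\<dots> = (2 * H * f c - IL + IR) / (2 * H)" unfolding eL eR H_def by simp
    finally show ?thesis using H0 by (simp add: field_simps)
  qed
  define Z where "Z = (1 / (\<alpha> + \<theta> + 1)) powr (1 / q)"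
  define Sa where "Sa = (\<theta> + 1) * Gc + \<alpha> * m * Ga"
  define Sb where "Sb = (\<theta> + 1) * Gc + \<alpha> * m * Gb"
  have spl: "(S / (\<alpha> + \<theta> + 1)) powr (1/q) = S powr (1/q) * Z" for S
    unfolding Z_def by (simp add: powr_divide)
  have hp: "h powr (\<theta> + 1) = H * h" unfolding H_def using h0 by (simp add: powr_add)
  have "\<bar>(IL - IR) / (2 * H)\<bar> \<le> (\<bar>IL\<bar> + \<bar>IR\<bar>) / (2 * H)"
    using H0 by (simp add: divide_right_mono abs_triangle_ineq4)
  also have "\<dots> \<le> (H * h / (\<theta> + 1) * (Sa powr (1/q) * Z) + H * h / (\<theta> + 1) * (Sb powr (1/q) * Z)) / (2 * H)"
    using estL estR H0 unfolding spl hp Sa_def Sb_def by (intro divide_right_mono add_mono) auto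
  also have "\<dots> = h / 2 * (1 / (\<theta> + 1)) * Z * (Sa powr (1/q) + Sb powr (1/q))"
  proof -
    have gen: "(H * h / T * (A * Z) + H * h / T * (B * Z)) / (2 * H) = h / 2 * (1 / T) * Z * (A + B)"
      if "T > 0" for T A B :: real using that H0 by (simp add: field_simps)
    have "\<theta> + 1 > 0" using \<theta> by simp
    from gen[OF this] show ?thesis .
  qed
  also have "h / 2 = m * (b - a) / 4" unfolding h_def by simp
  finally have fin: "\<bar>(IL - IR) / (2 * H)\<bar> \<le> m * (b - a) / 4 * (1 / (\<theta> + 1)) * Z * (Sa powr (1/q) + Sb powr (1/q))" .
  show ?thesis
    unfolding c_def[symmetric] p_def[symmetric] y_def[symmetric] coef RLl RLr expr
    using fin unfolding Z_def Sa_def Sb_def Gc_def Ga_def Gb_def .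
qed


end
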